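(* Let $N\ge 1$ and let $X_1,\dots,X_N$ be the $N$ roots of the $N$-th Legendre polynomial, transformed to the interval $[0,1]$. For $i=1,\dots,N$ let $h_i(\xi)=\prod_{s\ne i}\frac{\xi-X_s}{X_i-X_s}$ be the Lagrange basis polynomials, so that $h_1,\dots,h_N$ form a basis of the space $\mathsf{P}_{N-1}$ of real polynomials of degree at most $N-1$. Let $m\ge 1$, let $s_1,\dots,s_m>0$ with $\sum_{k=1}^m s_k=1$, and set $o_k=\sum_{\alpha=1}^{k-1}s_\alpha$ (so $o_1=0$); thus the cell face parameter interval $[0,1]$ (coordinate $\xi$) is partitioned into the mortar intervals $[o_k,o_k+s_k]$, and on the $k$-th mortar the mortar coordinate $z\in[0,1]$ is related to $\xi$ by $\xi=o_k+s_k z$. Given any $\phi^{\Omega}\in\mathsf{P}_{N-1}$ (a function of $\xi$), define for each $k$ the polynomial $\phi^{\Xi_k}\in\mathsf{P}_{N-1}$ (a function of $z$) as the unique solution of $$\int_0^1\big(\phi^{\Xi_k}(z)-\phi^{\Omega}(o_k+s_kz)\big)h_j(z)\,dz=0\quad\text{for all }j=1,\dots,N,$$ and then define $\phi^{*\Omega}\in\mathsf{P}_{N-1}$ as the unique solution of $$\sum_{k=1}^m\int_{o_k}^{o_k+s_k}\Big(\phi^{*\Omega}(\xi)-\phi^{\Xi_k}\big(\tfrac{\xi-o_k}{s_k}\big)\Big)h_j(\xi)\,d\xi=0\quad\text{for all }j=1,\dots,N.$$ Then $\phi^{*\Omega}=\phi^{\Omega}$. Equivalently, writing $\mathbf{P}^{\Omega\to\Xi_k}$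 for the $N\times N$ matrix mapping the nodal values $(\phi^{\Omega}(X_1),\dots,\phi^{\Omega}(X_N))$ to $(\phi^{\Xi_k}(X_1),\dots,\phi^{\Xi_k}(X_N))$, and $\mathbf{P}^{\Xi_k\to\Omega}$ for the $N\times N$ matrix such that the nodal values of $\phi^{*\Omega}$ equal $\sum_{k=1}^m\mathbf{P}^{\Xi_k\to\Omega}$ applied to the nodal values of $\phi^{\Xi_k}$, one has $\sum_{k=1}^m\mathbf{P}^{\Xi_k\to\Omega}\mathbf{P}^{\Omega\to\Xi_k}=\mathbf{I}$ (the $N\times N$ identity matrix).
   Context: This is the "outflow condition" for projections between a cell face $\Omega$ on a nonconforming (sliding) interface and the mortar elements $\Xi_1,\dots,\Xi_m$ that subdivide it: projecting a polynomial from a cell face to its mortars and immediately projecting back reproduces the original polynomial. The matrices $\mathbf{P}^{\Xi_k\to\Omega}$ are well defined by linearity: the back-projection is linear in the tuple of mortar polynomials and decomposes as a sum of contributions from each mortar, with $\mathbf{P}^{\Xi_k\to\Omega}$ being the contribution of mortar $k$ (explicitly $\mathbf{P}^{\Xi_k\to\Omega}=s_k\mathbf{M}^{-1}\mathbf{S}_k^{\mathsf T}$ and $\mathbf{P}^{\Omega\to\Xi_k}=\mathbf{M}^{-1}\mathbf{S}_k$, where $M_{ji}=\int_0^1h_i(z)h_j(z)\,dz$ and $(\mathbf{S}_k)_{ji}=\int_0^1h_i(o_k+s_kz)h_j(z)\,dz$). *)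

theory Defs
  imports "HOL-Analysis.Analysis" "HOL-Computational_Algebra.Polynomial"
begin

text \<open>Legendre polynomial on [-1,1] via Rodrigues' formula.\<close>
definition legendre_poly :: "nat \<Rightarrow> real poly" where
  "legendre_poly n = smult (1 / (2 ^ n * fact n)) ((pderiv ^^ n) ([:-1, 0, 1:] ^ n))"

definition lagrange_basis :: "(nat \<Rightarrow> real) \<Rightarrow> nat \<Rightarrow> nat \<Rightarrow> real poly" where
  "lagrange_basis X N i =
     (\<Prod>s\<in>{1..N} - {i}. smult (1 / (X i - X s)) [:- X s, 1:])"

definition mortar_offset :: "(nat \<Rightarrow> real) \<Rightarrow> nat \<Rightarrow> real" where
  "mortar_offset s k = (\<Sum>\<alpha>\<in>{1..<k}. s \<alpha>)"

end

theory Submission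
  imports Defs
begin

lemma lag_eval:
  assumes "inj_on X {1..N}" "i \<in> {1..N}" "j \<in> {1..N}"
  shows "poly (lagrange_basis X N i) (X j) = (if i = j then 1 else 0)"
proof (cases "i = j")
  case True
  have "poly (lagrange_basis X N i) (X j) = (\<Prod>s\<in>{1..N} - {i}. poly (smult (1 / (X i - X s)) [:- X s, 1:]) (X i))"
    using True by (simp add: lagrange_basis_def poly_prod)
  also have "\<dots> = 1"
  proof (rule prod.neutral, rule ballI)
    fix x assume "x \<in> {1..N} - {i}"
    then have "X i \<noteq> X x" using assms(1,2) by (metis DiffE inj_onD singletonI)
    then show "poly (smult (1 / (X i - X x)) [:- X x, 1:]) (X i) = 1" by (simp add: diff_divide_distrib[symmetric])
  qed
  finally show ?thesis using True by simp
next
  case False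
  have "poly (lagrange_basis X N i) (X j) = (\<Prod>s\<in>{1..N} - {i}. poly (smult (1 / (X i - X s)) [:- X s, 1:]) (X j))"
    by (simp add: lagrange_basis_def poly_prod)
  also have "\<dots> = 0"
    by (rule prod_zero) (use False assms in auto)
  finally show ?thesis using False by simp
qed

lemma lag_deg:
  assumes "i \<in> {1..N}"
  shows "degree (lagrange_basis X N i) \<le> N - 1"
proof -
  have "degree (lagrange_basis X N i) \<le> sum (degree \<circ> (\<lambda>s. smult (1 / (X i - X s)) [:- X s, 1:])) ({1..N} - {i})"
    unfolding lagrange_basis_def by (rule degree_prod_sum_le) simp
  also have "\<dots> \<le> sum (\<lambda>_. 1) ({1..N} - {i})"
    by (rule sum_mono) (simp add: degree_smult_le)
  also have "\<dots> = N - 1" using assms by simp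
  finally show ?thesis .
qed

lemma interp:
  assumes "inj_on X {1..N}" "N \<ge> 1" "degree q \<le> N - 1"
  shows "q = (\<Sum>j\<in>{1..N}. smult (poly q (X j)) (lagrange_basis X N j))"
proof (rule poly_eqI_degree[where A = "X ` {1..N}"])
  have c: "card (X ` {1..N}) = N" using assms(1) by (simp add: card_image)
  fix x assume "x \<in> X ` {1..N}"
  then obtain i where i: "i \<in> {1..N}" "x = X i" by auto
  have "poly (\<Sum>j\<in>{1..N}. smult (poly q (X j)) (lagrange_basis X N j)) x
      = (\<Sum>j\<in>{1..N}. poly q (X j) * (if j = i then 1 else 0))"
    using i assms(1) by (simp add: poly_sum lag_eval)
  also have "\<dots> = (\<Sum>j\<in>{1..N}. if j = i then poly q (X j) else 0)"
    by (rule sum.cong) auto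
  also have "\<dots> = poly q x" using i by simp
  finally show "poly q x = poly (\<Sum>j\<in>{1..N}. smult (poly q (X j)) (lagrange_basis X N j)) x" by simp
next
  have c: "card (X ` {1..N}) = N" using assms(1) by (simp add: card_image)
  show "degree q < card (X ` {1..N})" using c assms by simp
  have "degree (\<Sum>j\<in>{1..N}. smult (poly q (X j)) (lagrange_basis X N j)) \<le> N - 1"
  proof (rule degree_sum_le)
    fix j assume j: "j \<in> {1..N}"
    show "degree (smult (poly q (X j)) (lagrange_basis X N j)) \<le> N - 1"
      by (rule order.trans[OF degree_smult_le lag_deg[OF j]])
  qed simp
  then show "degree (\<Sum>j\<in>{1..N}. smult (poly q (X j)) (lagrange_basis X N j)) < card (X ` {1..N})"
    using c assms by simp
qed

lemma orth_zero:
  assumes "inj_on X {1..N}" "N \<ge> 1" "degree q \<le> N - 1"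
    and orth: "\<forall>j\<in>{1..N}. integral {0..1} (\<lambda>z. poly q z * poly (lagrange_basis X N j) z) = (0::real)"
  shows "q = 0"
proof -
  have cont: "\<And>p. continuous_on S (\<lambda>z. poly p z :: real)" for S by (auto intro: continuous_intros)
  have int: "\<And>p. (\<lambda>z. poly p z :: real) integrable_on {0..1}"
    by (rule integrable_continuous_interval) (rule cont)
  have "integral {0..1} (\<lambda>z. poly (q * q) z)
      = integral {0..1} (\<lambda>z. poly (q * (\<Sum>j\<in>{1..N}. smult (poly q (X j)) (lagrange_basis X N j))) z)"
    using interp[OF assms(1-3)] by simp
  also have "\<dots> = integral {0..1} (\<lambda>z. \<Sum>j\<in>{1..N}. poly q (X j) * (poly q z * poly (lagrange_basis X N j) z))"
    by (simp add: poly_sum sum_distrib_left mult_ac)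
  also have "\<dots> = (\<Sum>j\<in>{1..N}. integral {0..1} (\<lambda>z. poly q (X j) * (poly q z * poly (lagrange_basis X N j) z)))"
    by (rule integral_sum) (auto intro!: integrable_continuous_interval continuous_intros)
  also have "\<dots> = 0" using orth by simp
  finally have I0: "integral {0..1} (\<lambda>z. poly (q * q) z) = 0" .
  have hi: "((\<lambda>z. poly q z * poly q z) has_integral 0) (cbox 0 1)"
    using integrable_integral[OF int[of "q*q"]] I0 by (simp add: cbox_interval)
  have z: "poly q x * poly q x = 0" if "x \<in> {0..1::real}" for x
    by (rule has_integral_0_cbox_imp_0[OF _ _ hi])
       (use that in \<open>auto intro!: continuous_intros simp: cbox_interval\<close>)
  show "q = 0"
  proof (rule ccontr)
    assume "q \<noteq> 0"
    then have "finite {x. poly q x = 0}" by (rule poly_roots_finite)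
    moreover have "{0..1::real} \<subseteq> {x. poly q x = 0}" using z by auto
    ultimately show False by (meson finite_subset infinite_Icc zero_less_one)
  qed
qed

lemma offset_Suc:
  assumes "k \<ge> 1"
  shows "mortar_offset s (Suc k) = mortar_offset s k + s k"
proof -
  have "{1..<Suc k} = insert k {1..<k}" using assms by auto
  then show ?thesis unfolding mortar_offset_def by simp
qed

lemma offset_nonneg:
  assumes "\<forall>k\<in>{1..n}. s k > (0::real)" "k \<le> Suc n"
  shows "mortar_offset s k \<ge> 0"
  unfolding mortar_offset_def
proof (intro sum_nonneg)
  fix x assume "x \<in> {1..<k}"
  then have "x \<in> {1..n}" using assms(2) by auto
  then show "0 \<le> s x" using assms(1) by (simp add: less_imp_le)
qed

lemma sum_integrals:
  fixes p :: "real poly"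
  assumes "\<forall>k\<in>{1..n}. s k > 0"
  shows "(\<Sum>k\<in>{1..n}. integral {mortar_offset s k .. mortar_offset s k + s k} (poly p))
       = integral {0 .. mortar_offset s (Suc n)} (poly p)"
  using assms
proof (induction n)
  case 0
  then show ?case by (simp add: mortar_offset_def)
next
  case (Suc n)
  have IH: "(\<Sum>k\<in>{1..n}. integral {mortar_offset s k .. mortar_offset s k + s k} (poly p))
       = integral {0 .. mortar_offset s (Suc n)} (poly p)"
    using Suc by auto
  have o1: "mortar_offset s (Suc (Suc n)) = mortar_offset s (Suc n) + s (Suc n)"
    by (rule offset_Suc) simp
  have nn: "mortar_offset s (Suc n) \<ge> 0"
    using offset_nonneg[OF Suc.prems, of "Suc n"] by simp
  have sp: "s (Suc n) > 0" using Suc.prems by auto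
  have "(\<Sum>k\<in>{1..Suc n}. integral {mortar_offset s k .. mortar_offset s k + s k} (poly p))
     = integral {0 .. mortar_offset s (Suc n)} (poly p)
       + integral {mortar_offset s (Suc n) .. mortar_offset s (Suc (Suc n))} (poly p)"
    using IH o1 by simp
  also have "\<dots> = integral {0 .. mortar_offset s (Suc (Suc n))} (poly p)"
    by (rule Henstock_Kurzweil_Integration.integral_combine) (use nn sp o1 in \<open>auto intro!: integrable_continuous_interval continuous_intros\<close>)
  finally show ?case .
qed

theorem mainTheorem1:
  fixes N m :: nat and X s :: "nat \<Rightarrow> real"
    and phi phiStar :: "real poly" and phiXi :: "nat \<Rightarrow> real poly"
  assumes N_pos: "N \<ge> 1"
    and X_inj: "inj_on X {1..N}"
    and X_roots: "\<forall>i\<in>{1..N}. poly (legendre_poly N) (2 * X i - 1) = 0"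
    and m_pos: "m \<ge> 1"
    and s_pos: "\<forall>k\<in>{1..m}. s k > 0"
    and s_sum: "(\<Sum>k\<in>{1..m}. s k) = 1"
    and phi_deg: "degree phi \<le> N - 1"
    and phiXi_deg: "\<forall>k\<in>{1..m}. degree (phiXi k) \<le> N - 1"
    and phiXi_def: "\<forall>k\<in>{1..m}. \<forall>j\<in>{1..N}.
          integral {0..1} (\<lambda>z. (poly (phiXi k) z - poly phi (mortar_offset s k + s k * z))
                                  * poly (lagrange_basis X N j) z) = 0"
    and phiStar_deg: "degree phiStar \<le> N - 1"
    and phiStar_def: "\<forall>j\<in>{1..N}.
          (\<Sum>k\<in>{1..m}. integral {mortar_offset s k .. mortar_offset s k + s k}
             (\<lambda>\<xi>. (poly phiStar \<xi> - poly (phiXi k) ((\<xi> - mortar_offset s k) / s k))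
                   * poly (lagrange_basis X N j) \<xi>)) = 0"
  shows "phiStar = phi"
proof -
  let ?o = "mortar_offset s"
  have Xi: "phiXi k = pcompose phi [:?o k, s k:]" if k: "k \<in> {1..m}" for k
  proof -
    have "phiXi k - pcompose phi [:?o k, s k:] = 0"
    proof (rule orth_zero[OF X_inj N_pos])
      have "degree (pcompose phi [:?o k, s k:]) \<le> N - 1"
        using phi_deg by (simp add: degree_pcompose)
      then show "degree (phiXi k - pcompose phi [:?o k, s k:]) \<le> N - 1"
        using phiXi_deg k by (meson degree_diff_le)
      show "\<forall>j\<in>{1..N}. integral {0..1} (\<lambda>z. poly (phiXi k - pcompose phi [:?o k, s k:]) z
             * poly (lagrange_basis X N j) z) = 0"
        using phiXi_def k by (simp add: poly_pcompose algebra_simps)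
    qed
    then show ?thesis by simp
  qed
  have "phiStar - phi = 0"
  proof (rule orth_zero[OF X_inj N_pos])
    show "degree (phiStar - phi) \<le> N - 1"
      using phi_deg phiStar_deg by (meson degree_diff_le)
    show "\<forall>j\<in>{1..N}. integral {0..1} (\<lambda>z. poly (phiStar - phi) z * poly (lagrange_basis X N j) z) = 0"
    proof
      fix j assume j: "j \<in> {1..N}"
      let ?p = "(phiStar - phi) * lagrange_basis X N j"
      have "0 = (\<Sum>k\<in>{1..m}. integral {?o k .. ?o k + s k}
             (\<lambda>\<xi>. (poly phiStar \<xi> - poly (phiXi k) ((\<xi> - ?o k) / s k))
                   * poly (lagrange_basis X N j) \<xi>))"
        using phiStar_def j by simp
      also have "\<dots> = (\<Sum>k\<in>{1..m}. integral {?o k .. ?o k + s k} (poly ?p))"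
      proof (rule sum.cong[OF refl], rule integral_cong)
        fix k x assume k: "k \<in> {1..m}"
        have "s k > 0" using s_pos k by auto
        then have "poly (phiXi k) ((x - ?o k) / s k) = poly phi x"
          using Xi[OF k] by (simp add: poly_pcompose)
        then show "(poly phiStar x - poly (phiXi k) ((x - ?o k) / s k)) * poly (lagrange_basis X N j) x
             = poly ?p x" by simp
      qed
      also have "\<dots> = integral {0 .. ?o (Suc m)} (poly ?p)"
        by (rule sum_integrals) (use s_pos in auto)
      also have "?o (Suc m) = 1"
        using s_sum unfolding mortar_offset_def by (metis atLeastLessThanSuc_atLeastAtMost)
      finally show "integral {0..1} (\<lambda>z. poly (phiStar - phi) z * poly (lagrange_basis X N j) z) = 0"
        by simp
    qed
  qed
  then show ?thesis by simp
qed

end
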